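(* Let $\mathcal{G}$ be a strongly connected digraph with $N$ nodes and consider the distributed quantized weight-balancing algorithm described in the context, with step-size $\gamma(k)=2^{-n}$ for $2^n-1\le k\le 2^{n+1}-2$. If at some iteration $k$ one has $\Vert\boldsymbol{\epsilon}(k)\Vert_1\ge 2N(N-1)\gamma(k)$, then the decreasing event $\mathcal{D}_t$ occurs for some integer $t$ with $k\le t\le k+N^{2N}$.
   Context: $\mathcal{G}=(\mathcal{V},\mathcal{E})$, $\mathcal{V}=\{1,\dots,N\}$, no self-loops; $\mathcal{N}_i^-=\{j:(j,i)\in\mathcal{E}\}$, $\mathcal{N}_i^+=\{j:(i,j)\in\mathcal{E}\}$, $d_i^+=|\mathcal{N}_i^+|$. Algorithm: $a_{ij}(0)=1$ if $j\in\mathcal{N}_i^-$ and $0$ otherwise; $b_i(k)=\sum_{j\in\mathcal{N}_i^-}a_{ij}(k)-\sum_{j\in\mathcal{N}_i^+}a_{ji}(k)$; $n_i(k)=1$ if $b_i(k)\ge d_i^+\gamma(k)$, else $0$; $a_{ij}(k+1)=a_{ij}(k)+n_j(k)\gamma(k)$ for $j\in\mathcal{N}_i^-$. $\boldsymbol{\epsilon}(k)=(|b_i(k)|)_{i=1}^N$. The decreasing event $\mathcal{D}_k$ is: there exist $i\in\mathcal{V}$ and $j\in\mathcal{N}_i^+$ with $n_i(k)>0$ and $b_j(k)<0$. *)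

theory Defs
  imports Complex_Main
begin

text \<open>Nodes are 1..N; the digraph is given by its edge set E (pairs (j,i) meaning j -> i).
  Weights are stored as a function a i j (weight of edge (j,i), i.e. a_{ij}).\<close>

definition nodes :: "nat \<Rightarrow> nat set" where
  "nodes N = {1..N}"

definition in_nbrs :: "nat \<Rightarrow> (nat \<times> nat) set \<Rightarrow> nat \<Rightarrow> nat set" where
  "in_nbrs N E i = {j \<in> nodes N. (j, i) \<in> E}"

definition out_nbrs :: "nat \<Rightarrow> (nat \<times> nat) set \<Rightarrow> nat \<Rightarrow> nat set" where
  "out_nbrs N E i = {j \<in> nodes N. (i, j) \<in> E}"

definition out_deg :: "nat \<Rightarrow> (nat \<times> nat) set \<Rightarrow> nat \<Rightarrow> nat" where
  "out_deg N E i = card (out_nbrs N E i)"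

definition strongly_connected :: "nat \<Rightarrow> (nat \<times> nat) set \<Rightarrow> bool" where
  "strongly_connected N E \<longleftrightarrow>
     E \<subseteq> nodes N \<times> nodes N \<and> (\<forall>i \<in> nodes N. (i, i) \<notin> E) \<and>
     (\<forall>i \<in> nodes N. \<forall>j \<in> nodes N. (i, j) \<in> E\<^sup>*)"

definition stepsize :: "nat \<Rightarrow> real" where
  "stepsize k = (1/2) ^ (THE n::nat. 2^n - 1 \<le> k \<and> k \<le> 2^(n+1) - 2)"

definition imbalance :: "nat \<Rightarrow> (nat \<times> nat) set \<Rightarrow> (nat \<Rightarrow> nat \<Rightarrow> real) \<Rightarrow> nat \<Rightarrow> real" where
  "imbalance N E a i = (\<Sum>j \<in> in_nbrs N E i. a i j) - (\<Sum>j \<in> out_nbrs N E i. a j i)"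

definition flag :: "nat \<Rightarrow> (nat \<times> nat) set \<Rightarrow> (nat \<Rightarrow> nat \<Rightarrow> real) \<Rightarrow> real \<Rightarrow> nat \<Rightarrow> real" where
  "flag N E a g i = (if imbalance N E a i \<ge> real (out_deg N E i) * g then 1 else 0)"

primrec weights :: "nat \<Rightarrow> (nat \<times> nat) set \<Rightarrow> nat \<Rightarrow> (nat \<Rightarrow> nat \<Rightarrow> real)" where
  "weights N E 0 = (\<lambda>i j. if j \<in> in_nbrs N E i then 1 else 0)"
| "weights N E (Suc k) = (let a = weights N E k in
     (\<lambda>i j. if j \<in> in_nbrs N E i then a i j + flag N E a (stepsize k) j * stepsize k else a i j))"

definition b :: "nat \<Rightarrow> (nat \<times> nat) set \<Rightarrow> nat \<Rightarrow> nat \<Rightarrow> real" where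
  "b N E k i = imbalance N E (weights N E k) i"

definition nflag :: "nat \<Rightarrow> (nat \<times> nat) set \<Rightarrow> nat \<Rightarrow> nat \<Rightarrow> real" where
  "nflag N E k i = flag N E (weights N E k) (stepsize k) i"

definition eps_norm1 :: "nat \<Rightarrow> (nat \<times> nat) set \<Rightarrow> nat \<Rightarrow> real" where
  "eps_norm1 N E k = (\<Sum>i \<in> nodes N. \<bar>b N E k i\<bar>)"

definition decreasing_event :: "nat \<Rightarrow> (nat \<times> nat) set \<Rightarrow> nat \<Rightarrow> bool" where
  "decreasing_event N E k \<longleftrightarrow>
     (\<exists>i \<in> nodes N. \<exists>j \<in> out_nbrs N E i. nflag N E k i > 0 \<and> b N E k j < 0)"

end

theory Submission
  imports Defs
begin


definition blk :: "nat \<Rightarrow> nat" where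
  "blk k = (THE n::nat. 2^n - 1 \<le> k \<and> k \<le> 2^(n+1) - 2)"

lemma blk_eq:
  assumes "2^n \<le> k + 1" "k + 1 < 2^(n+1)"
  shows "blk k = n"
  unfolding blk_def
proof (rule the_equality)
  show "2^n - 1 \<le> k \<and> k \<le> 2^(n+1) - 2" using assms by auto
next
  fix m assume m: "2^m - 1 \<le> k \<and> k \<le> 2^(m+1) - 2"
  have p1: "(1::nat) \<le> 2^m" by simp
  have p2: "(2::nat) \<le> 2^(m+1)" by simp
  have a: "2^m \<le> k+1" using m p1 by linarith
  have b: "k+1 < 2^(m+1)" using m p2 by linarith
  show "m = n"
  proof (rule ccontr)
    assume "m \<noteq> n"
    then consider "m < n" | "n < m" by linarith
    then show False
    proof cases
      case 1
      then have "2^(m+1) \<le> (2::nat)^n" by (intro power_increasing) auto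
      then show False using b assms by linarith
    next
      case 2
      then have "2^(n+1) \<le> (2::nat)^m" by (intro power_increasing) auto
      then show False using a assms by linarith
    qed
  qed
qed

lemma blk_props: "2^(blk k) \<le> k + 1 \<and> k + 1 < 2^(blk k + 1)"
proof -
  obtain n where "2^n \<le> k+1 \<and> k+1 < (2::nat)^(n+1)"
    using ex_power_ivl1[of 2 "k+1"] by auto
  moreover from this have "blk k = n" using blk_eq by blast
  ultimately show ?thesis by simp
qed

lemma blk_mono: "k \<le> k' \<Longrightarrow> blk k \<le> blk k'"
proof -
  assume "k \<le> k'"
  have "(2::nat)^(blk k) < 2^(blk k' + 1)" using blk_props[of k] blk_props[of k'] \<open>k \<le> k'\<close> by linarith
  then have "blk k < blk k' + 1" by (rule power_less_imp_less_exp[rotated]) simp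
  then show ?thesis by simp
qed

lemma stepsize_blk: "stepsize k = (1/2) ^ blk k"
  unfolding stepsize_def blk_def by simp

lemma stepsize_pos: "stepsize k > 0" by (simp add: stepsize_blk)

lemma stepsize_mono: "k \<le> k' \<Longrightarrow> stepsize k' \<le> stepsize k"
  unfolding stepsize_blk by (rule power_decreasing) (auto simp: blk_mono)

lemma stepsize_const: "k \<le> s \<Longrightarrow> s \<le> k' \<Longrightarrow> blk k = blk k' \<Longrightarrow> stepsize s = stepsize k"
  unfolding stepsize_blk using blk_mono[of k s] blk_mono[of s k'] by simp

lemma subwindow:
  fixes M W k :: nat
  assumes "M \<ge> 1" "W \<ge> 3 * M"
  shows "\<exists>a. k \<le> a \<and> a + M \<le> k + W + 1 \<and> blk a = blk (a + M - 1)"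
proof -
  define n where "n = blk (k + W)"
  have bn: "2^n \<le> k + W + 1" "k + W + 1 < 2^(n+1)" using blk_props[of "k+W"] n_def by auto
  show ?thesis
  proof (cases "2^n \<le> k + 1")
    case True
    have "blk k = n" using True bn by (intro blk_eq) auto
    moreover have "blk (k + M - 1) = n" using True bn assms by (intro blk_eq) auto
    ultimately show ?thesis using assms by (intro exI[of _ k]) auto
  next
    case False
    show ?thesis
    proof (cases "M \<le> k + W + 1 - (2^n - 1)")
      case True
      have "blk (2^n - 1) = n" using bn by (intro blk_eq) auto
      moreover have "blk (2^n - 1 + M - 1) = n" using True bn False assms by (intro blk_eq) auto
      ultimately show ?thesis using True False bn assms by (intro exI[of _ "2^n - 1"]) auto
    next
      case F2: False
      have n1: "n \<ge> 1" using False by (cases n) auto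
      have e: "(2::nat)^n = 2 * 2^(n-1)" using n1 by (cases n) auto
      have big: "2^n > 2 * M + 1" using F2 assms by linarith
      have ak: "2^n - 1 - M \<ge> k" using F2 False assms by linarith
      have "blk (2^n - 1 - M) = n - 1" using e big n1 assms by (intro blk_eq) auto
      moreover have "blk (2^n - 1 - M + M - 1) = n - 1" using e big n1 assms by (intro blk_eq) auto
      ultimately show ?thesis using ak F2 False bn big by (intro exI[of _ "2^n - 1 - M"]) auto
    qed
  qed
qed



lemma imbalance_sum_zero:
  "(\<Sum>i\<in>nodes N. imbalance N E a i) = 0"
proof -
  let ?V = "nodes N"
  have fin: "finite ?V" by (simp add: nodes_def)
  have 1: "(\<Sum>i\<in>?V. \<Sum>j\<in>in_nbrs N E i. a i j) = (\<Sum>i\<in>?V. \<Sum>j\<in>?V. if (j,i)\<in>E then a i j else 0)"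
    unfolding in_nbrs_def using fin by (simp add: sum.inter_filter)
  have 2: "(\<Sum>i\<in>?V. \<Sum>j\<in>out_nbrs N E i. a j i) = (\<Sum>i\<in>?V. \<Sum>j\<in>?V. if (i,j)\<in>E then a j i else 0)"
    unfolding out_nbrs_def using fin by (simp add: sum.inter_filter)
  also have "\<dots> = (\<Sum>j\<in>?V. \<Sum>i\<in>?V. if (i,j)\<in>E then a j i else 0)"
    by (rule sum.swap)
  finally show ?thesis unfolding imbalance_def sum_subtractf using 1 by simp
qed

lemma sum_b_zero: "(\<Sum>i\<in>nodes N. b N E t i) = 0"
  unfolding b_def by (rule imbalance_sum_zero)

lemma nflag_eq: "nflag N E t i = (if b N E t i \<ge> real (out_deg N E i) * stepsize t then 1 else 0)"
  unfolding nflag_def flag_def b_def by simp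

lemma b_step:
  assumes i: "i \<in> nodes N"
  shows "b N E (Suc t) i = b N E t i + stepsize t *
     ((\<Sum>j\<in>in_nbrs N E i. nflag N E t j) - real (out_deg N E i) * nflag N E t i)"
proof -
  let ?a = "weights N E t" and ?g = "stepsize t"
  have 1: "(\<Sum>j\<in>in_nbrs N E i. weights N E (Suc t) i j) = (\<Sum>j\<in>in_nbrs N E i. ?a i j + nflag N E t j * ?g)"
    by (rule sum.cong) (auto simp: Let_def nflag_def)
  have 2: "(\<Sum>j\<in>out_nbrs N E i. weights N E (Suc t) j i) = (\<Sum>j\<in>out_nbrs N E i. ?a j i + nflag N E t i * ?g)"
  proof (rule sum.cong)
    fix j assume "j \<in> out_nbrs N E i"
    then have "i \<in> in_nbrs N E j" using i unfolding out_nbrs_def in_nbrs_def by auto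
    then show "weights N E (Suc t) j i = ?a j i + nflag N E t i * ?g" by (simp add: Let_def nflag_def)
  qed simp
  show ?thesis
    unfolding b_def imbalance_def 1 2 sum.distrib
    by (simp add: sum_distrib_right sum_distrib_left out_deg_def algebra_simps)
qed

context
  fixes N :: nat and E :: "(nat \<times> nat) set"
  assumes sc: "strongly_connected N E" and N2: "N \<ge> 2"
begin

lemma E_sub: "E \<subseteq> nodes N \<times> nodes N" using sc unfolding strongly_connected_def by auto

lemma finV: "finite (nodes N)" by (simp add: nodes_def)
lemma cardV: "card (nodes N) = N" by (simp add: nodes_def)

lemma out_deg_le: assumes "i \<in> nodes N" shows "out_deg N E i \<le> N - 1"
proof -
  have "out_nbrs N E i \<subseteq> nodes N - {i}"
    using sc assms unfolding strongly_connected_def out_nbrs_def by auto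
  then have "card (out_nbrs N E i) \<le> card (nodes N - {i})" by (intro card_mono) (auto simp: finV)
  also have "\<dots> = N - 1" using assms by (simp add: cardV finV)
  finally show ?thesis by (simp add: out_deg_def)
qed

end


lemma fin_nodes[simp]: "finite (nodes N)" by (simp add: nodes_def)
lemma card_nodes[simp]: "card (nodes N) = N" by (simp add: nodes_def)

lemma nflag_01: "nflag N E t i = 0 \<or> nflag N E t i = 1"
  by (simp add: nflag_eq)

lemma nflag_nonneg: "nflag N E t i \<ge> 0"
  by (simp add: nflag_eq)

lemma step_nonneg:
  assumes i: "i \<in> nodes N" and nn: "b N E t i \<ge> 0"
  shows "b N E (Suc t) i \<ge> 0"
proof -
  have s: "(\<Sum>j\<in>in_nbrs N E i. nflag N E t j) \<ge> 0" by (rule sum_nonneg) (simp add: nflag_nonneg)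
  have g: "stepsize t > 0" by (rule stepsize_pos)
  show ?thesis
  proof (cases "nflag N E t i = 1")
    case True
    then have "b N E t i \<ge> real (out_deg N E i) * stepsize t"
      by (simp add: nflag_eq split: if_splits)
    moreover have "b N E (Suc t) i = b N E t i - real (out_deg N E i) * stepsize t
        + stepsize t * (\<Sum>j\<in>in_nbrs N E i. nflag N E t j)"
      unfolding b_step[OF i] True by (simp add: algebra_simps)
    moreover have "stepsize t * (\<Sum>j\<in>in_nbrs N E i. nflag N E t j) \<ge> 0"
      using s g by simp
    ultimately show ?thesis by linarith
  next
    case False
    then have "nflag N E t i = 0" using nflag_01 by metis
    then show ?thesis unfolding b_step[OF i] using s g nn by simp
  qed
qed

lemma step_neg:
  assumes i: "i \<in> nodes N" and ng: "b N E t i < 0" and nd: "\<not> decreasing_event N E t"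
  shows "b N E (Suc t) i = b N E t i"
proof -
  have g: "stepsize t > 0" by (rule stepsize_pos)
  have "real (out_deg N E i) * stepsize t \<ge> 0" using g by simp
  then have fi: "nflag N E t i = 0" using ng by (simp add: nflag_eq)
  have fj: "nflag N E t j = 0" if j: "j \<in> in_nbrs N E i" for j
  proof (rule ccontr)
    assume "nflag N E t j \<noteq> 0"
    then have "nflag N E t j > 0" using nflag_01[of N E t j] by auto
    moreover have "j \<in> nodes N" "i \<in> out_nbrs N E j" using j i by (auto simp: in_nbrs_def out_nbrs_def)
    ultimately show False using nd ng unfolding decreasing_event_def by blast
  qed
  show ?thesis unfolding b_step[OF i] using fi fj by simp
qed

lemma eps_formula: "eps_norm1 N E t = -2 * (\<Sum>i\<in>nodes N. if b N E t i < 0 then b N E t i else 0)"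
proof -
  have "eps_norm1 N E t = (\<Sum>i\<in>nodes N. b N E t i - 2 * (if b N E t i < 0 then b N E t i else 0))"
    unfolding eps_norm1_def by (rule sum.cong) auto
  also have "\<dots> = -2 * (\<Sum>i\<in>nodes N. if b N E t i < 0 then b N E t i else 0)"
    by (simp add: sum_subtractf sum_b_zero sum_distrib_left sum_negf)
  finally show ?thesis .
qed

lemma eps_pos_part: "eps_norm1 N E t = 2 * (\<Sum>i\<in>nodes N. max (b N E t i) 0)"
proof -
  have "eps_norm1 N E t = (\<Sum>i\<in>nodes N. 2 * max (b N E t i) 0 - b N E t i)"
    unfolding eps_norm1_def by (rule sum.cong) auto
  also have "\<dots> = 2 * (\<Sum>i\<in>nodes N. max (b N E t i) 0)"
    by (simp add: sum_subtractf sum_b_zero sum_distrib_left)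
  finally show ?thesis .
qed

context
  fixes N :: nat and E :: "(nat \<times> nat) set"
  assumes sc: "strongly_connected N E" and N2: "N \<ge> 2"
begin

lemma no_fire_small:
  assumes nf: "\<forall>i\<in>nodes N. nflag N E t i = 0"
  shows "eps_norm1 N E t \<le> 2 * (real N - 1)^2 * stepsize t"
proof -
  let ?V = "nodes N" and ?g = "stepsize t"
  have lt: "b N E t i < (real N - 1) * ?g" if i: "i \<in> ?V" for i
  proof -
    have "b N E t i < real (out_deg N E i) * ?g" using nf i by (force simp: nflag_eq split: if_splits)
    also have "\<dots> \<le> (real N - 1) * ?g"
      using out_deg_le[OF sc N2 i] N2 stepsize_pos[of t]
      by (intro mult_right_mono) auto
    finally show ?thesis .
  qed
  have "\<exists>i0\<in>?V. b N E t i0 \<le> 0"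
  proof (rule ccontr)
    assume "\<not> ?thesis"
    then have "\<forall>i\<in>?V. b N E t i > 0" by auto
    moreover have "?V \<noteq> {}" using N2 by (auto simp: nodes_def)
    ultimately have "(\<Sum>i\<in>?V. b N E t i) > 0" by (intro sum_pos) (auto simp: fin_nodes)
    then show False using sum_b_zero by simp
  qed
  then obtain i0 where i0: "i0 \<in> ?V" "b N E t i0 \<le> 0" by blast
  have "(\<Sum>i\<in>?V. max (b N E t i) 0) = (\<Sum>i\<in>?V - {i0}. max (b N E t i) 0)"
    using i0 by (intro sum.mono_neutral_right) (auto simp: fin_nodes)
  also have "\<dots> \<le> (\<Sum>i\<in>?V - {i0}. (real N - 1) * ?g)"
    using lt stepsize_pos[of t] N2 by (intro sum_mono) (auto intro: less_imp_le)
  also have "\<dots> = (real N - 1) * ((real N - 1) * ?g)"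
    using i0 N2 by (simp add: fin_nodes card_nodes of_nat_diff)
  finally show ?thesis unfolding eps_pos_part by (simp add: power2_eq_square)
qed

end


primrec lev :: "nat \<Rightarrow> (nat \<times> nat) set \<Rightarrow> nat set \<Rightarrow> nat \<Rightarrow> nat set" where
  "lev N E S 0 = S"
| "lev N E S (Suc m) = lev N E S m \<union> {i \<in> nodes N. \<exists>j\<in>lev N E S m. (i, j) \<in> E}"

lemma lev_sub: "S \<subseteq> nodes N \<Longrightarrow> lev N E S m \<subseteq> nodes N"
  by (induction m) auto

lemma lev_mono: "lev N E S m \<subseteq> lev N E S (Suc m)" by simp

context
  fixes N :: nat and E :: "(nat \<times> nat) set"
  assumes sc: "strongly_connected N E" and N2: "N \<ge> 2"
begin

lemma lev_closed:
  assumes eq: "lev N E S (Suc m) = lev N E S m"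
    and ne: "S \<noteq> {}" and SV: "S \<subseteq> nodes N"
  shows "lev N E S m = nodes N"
proof -
  have hback: "x \<in> lev N E S m" if "(x, y) \<in> E\<^sup>*" "y \<in> lev N E S m" for x y
    using that
  proof (induction rule: converse_rtrancl_induct)
    case base then show ?case .
  next
    case (step x z)
    have "x \<in> nodes N" using step(1) E_sub[OF sc N2] by auto
    then have "x \<in> lev N E S (Suc m)" using step by auto
    then show ?case by (simp only: eq)
  qed
  obtain s where s: "s \<in> S" using ne by auto
  have "s \<in> lev N E S m" using s by (induction m) auto
  moreover have "\<forall>x\<in>nodes N. (x, s) \<in> E\<^sup>*"
    using sc s SV unfolding strongly_connected_def by auto
  ultimately have "nodes N \<subseteq> lev N E S m" using hback by blast
  then show ?thesis using lev_sub[OF SV] by auto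
qed

lemma lev_card:
  assumes ne: "S \<noteq> {}" and SV: "S \<subseteq> nodes N"
  shows "lev N E S m = nodes N \<or> m + 1 \<le> card (lev N E S m)"
proof (induction m)
  case 0
  have "finite S" using SV finite_subset by (auto simp: nodes_def)
  then show ?case using ne by (simp add: Suc_le_eq card_gt_0_iff)
next
  case (Suc m)
  show ?case
  proof (cases "lev N E S m = nodes N")
    case True
    then have "lev N E S (Suc m) = nodes N" using lev_sub[OF SV, of E "Suc m"] lev_mono[of N E S m] by auto
    then show ?thesis by simp
  next
    case False
    then have c: "m + 1 \<le> card (lev N E S m)" using Suc by auto
    have "lev N E S (Suc m) \<noteq> lev N E S m" using lev_closed False ne SV by metis
    then have "lev N E S m \<subset> lev N E S (Suc m)" using lev_mono[of N E S m] by auto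
    moreover have "finite (lev N E S (Suc m))" using lev_sub[OF SV] finite_subset fin_nodes by metis
    ultimately have "card (lev N E S m) < card (lev N E S (Suc m))" by (rule psubset_card_mono[rotated])
    then show ?thesis using c by simp
  qed
qed

lemma lev_full:
  assumes ne: "S \<noteq> {}" and SV: "S \<subseteq> nodes N"
  shows "lev N E S (N - 1) = nodes N"
proof -
  have "lev N E S (N-1) = nodes N \<or> N \<le> card (lev N E S (N-1))"
    using lev_card[OF ne SV, of "N-1"] N2 by simp
  moreover have "lev N E S (N-1) \<subseteq> nodes N" by (rule lev_sub[OF SV])
  moreover have "card (lev N E S (N-1)) \<le> N"
    using card_mono[OF fin_nodes \<open>lev N E S (N-1) \<subseteq> nodes N\<close>] by simp
  ultimately show ?thesis
    using card_subset_eq[OF fin_nodes \<open>lev N E S (N-1) \<subseteq> nodes N\<close>] by auto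
qed

end


context
  fixes N :: nat and E :: "(nat \<times> nat) set"
  assumes sc: "strongly_connected N E" and N2: "N \<ge> 2"
begin

lemma main_contra:
  assumes hyp: "eps_norm1 N E k \<ge> 2 * real N * (real N - 1) * stepsize k"
    and noD: "\<And>t. k \<le> t \<Longrightarrow> t \<le> k + N ^ (2 * N) \<Longrightarrow> \<not> decreasing_event N E t"
  shows False
proof -
  define W where "W = N ^ (2 * N)"
  define Neg where "Neg = {i \<in> nodes N. b N E k i < 0}"
  have inv: "\<forall>i\<in>nodes N. (b N E (k+d) i < 0 \<longleftrightarrow> b N E k i < 0) \<and>
      (b N E k i < 0 \<longrightarrow> b N E (k+d) i = b N E k i)" if "d \<le> W + 1" for d
    using that
  proof (induction d)
    case 0 show ?case by simp
  next
    case (Suc d)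
    have nd: "\<not> decreasing_event N E (k+d)" using noD Suc.prems W_def by simp
    have IH: "\<forall>i\<in>nodes N. (b N E (k+d) i < 0 \<longleftrightarrow> b N E k i < 0) \<and>
      (b N E k i < 0 \<longrightarrow> b N E (k+d) i = b N E k i)" using Suc by simp
    show ?case
    proof
      fix i assume i: "i \<in> nodes N"
      have h: "(b N E (k+d) i < 0 \<longleftrightarrow> b N E k i < 0) \<and> (b N E k i < 0 \<longrightarrow> b N E (k+d) i = b N E k i)"
        using IH i by blast
      show "(b N E (k + Suc d) i < 0 \<longleftrightarrow> b N E k i < 0) \<and>
          (b N E k i < 0 \<longrightarrow> b N E (k + Suc d) i = b N E k i)"
      proof (cases "b N E k i < 0")
        case True
        then have "b N E (k+d) i = b N E k i" "b N E (k+d) i < 0" using h by auto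
        then have "b N E (Suc (k+d)) i = b N E k i" using step_neg[OF i _ nd] by simp
        then show ?thesis using True by simp
      next
        case False
        then have "b N E (k+d) i \<ge> 0" using h by linarith
        then have "b N E (Suc (k+d)) i \<ge> 0" by (rule step_nonneg[OF i])
        then show ?thesis using False by simp
      qed
    qed
  qed
  have inv': "(b N E t i < 0 \<longleftrightarrow> b N E k i < 0) \<and> (b N E k i < 0 \<longrightarrow> b N E t i = b N E k i)"
    if "k \<le> t" "t \<le> k + W + 1" "i \<in> nodes N" for t i
  proof -
    have "t = k + (t - k)" using that by simp
    moreover have "t - k \<le> W + 1" using that by simp
    ultimately show ?thesis using inv[of "t - k"] that(3) by metis
  qed
  have eps_const: "eps_norm1 N E t = eps_norm1 N E k" if "k \<le> t" "t \<le> k + W + 1" for t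
  proof -
    have "(\<Sum>i\<in>nodes N. if b N E t i < 0 then b N E t i else 0) =
          (\<Sum>i\<in>nodes N. if b N E k i < 0 then b N E k i else 0)"
      using inv'[OF that] by (intro sum.cong) auto
    then show ?thesis unfolding eps_formula by simp
  qed
  have gk: "stepsize k > 0" by (rule stepsize_pos)
  have fire: "\<exists>i\<in>nodes N. nflag N E t i = 1" if "k \<le> t" "t \<le> k + W" for t
  proof (rule ccontr)
    assume "\<not> ?thesis"
    then have "\<forall>i\<in>nodes N. nflag N E t i = 0" using nflag_01 by metis
    then have le: "eps_norm1 N E t \<le> 2 * (real N - 1)^2 * stepsize t"
      by (rule no_fire_small[OF sc N2])
    have gt: "stepsize t > 0" by (rule stepsize_pos)
    have mono: "stepsize t \<le> stepsize k" using that by (intro stepsize_mono) simp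
    have x2: "real N \<ge> 2" using N2 by simp
    have "2 * real N * (real N - 1) * stepsize t \<le> 2 * real N * (real N - 1) * stepsize k"
      using mono x2 by (intro mult_left_mono) auto
    moreover have "2 * (real N - 1)^2 * stepsize t < 2 * real N * (real N - 1) * stepsize t"
    proof -
      have "2 * real N * (real N - 1) * stepsize t - 2 * (real N - 1)^2 * stepsize t
            = 2 * (real N - 1) * stepsize t" by (simp add: power2_eq_square algebra_simps)
      moreover have "2 * (real N - 1) * stepsize t > 0" using x2 gt by simp
      ultimately show ?thesis by linarith
    qed
    moreover have "eps_norm1 N E t = eps_norm1 N E k" using that by (intro eps_const) auto
    ultimately show False using le hyp by linarith
  qed
  define M where "M = 2 * N ^ (N - 1)"
  have M1: "M \<ge> 1" using N2 by (simp add: M_def)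
  have W3: "W \<ge> 3 * M"
  proof -
    have "2 * N = (N + 1) + (N - 1)" using N2 by simp
    then have Wf: "W = N ^ (N + 1) * N ^ (N - 1)" unfolding W_def by (metis power_add)
    moreover have "N ^ (N + 1) \<ge> N ^ 3" using N2 by (intro power_increasing) auto
    moreover have "N ^ 3 \<ge> (2::nat) ^ 3" using N2 by (intro power_mono) auto
    ultimately have "8 \<le> N ^ (N + 1)" by simp
    then have "8 * N ^ (N - 1) \<le> N ^ (N + 1) * N ^ (N - 1)" by (rule mult_le_mono1)
    then have "W \<ge> 8 * N ^ (N - 1)" using Wf by simp
    then show ?thesis unfolding M_def by simp
  qed
  obtain a where a: "k \<le> a" "a + M \<le> k + W + 1" "blk a = blk (a + M - 1)"
    using subwindow[OF M1 W3] by blast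
  define g where "g = stepsize a"
  have g_pos: "g > 0" unfolding g_def by (rule stepsize_pos)
  have gs: "stepsize s = g" if "a \<le> s" "s < a + M" for s
    unfolding g_def using that a(3) by (intro stepsize_const[of a s "a + M - 1"]) auto
  define f where "f i t = (\<Sum>s\<in>{a..<t}. nflag N E s i)" for i t
  have f_Suc: "f i (Suc t) = f i t + nflag N E t i" if "a \<le> t" for i t
    unfolding f_def using that by (simp add: sum.atLeastLessThan_Suc)
  have f_nn: "f i t \<ge> 0" for i t unfolding f_def by (intro sum_nonneg) (simp add: nflag_nonneg)
  have f_a: "f i a = 0" for i unfolding f_def by simp
  have brep: "b N E (a+d) j = b N E a j + g * ((\<Sum>i\<in>in_nbrs N E j. f i (a+d)) - real (out_deg N E j) * f j (a+d))"
    if "d \<le> M" "j \<in> nodes N" for d j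
    using that(1)
  proof (induction d)
    case 0 then show ?case by (simp add: f_a)
  next
    case (Suc d)
    have gd: "stepsize (a + d) = g" using Suc.prems by (intro gs) auto
    have fs: "(\<Sum>i\<in>in_nbrs N E j. f i (a + Suc d)) = (\<Sum>i\<in>in_nbrs N E j. f i (a+d)) + (\<Sum>i\<in>in_nbrs N E j. nflag N E (a+d) i)"
      by (simp add: f_Suc sum.distrib)
    have "b N E (a + Suc d) j = b N E (Suc (a+d)) j" by simp
    also have "\<dots> = b N E (a+d) j + g * ((\<Sum>i\<in>in_nbrs N E j. nflag N E (a+d) i) - real (out_deg N E j) * nflag N E (a+d) j)"
      using b_step[OF that(2)] gd by simp
    also have "\<dots> = b N E a j + g * ((\<Sum>i\<in>in_nbrs N E j. f i (a + Suc d)) - real (out_deg N E j) * f j (a + Suc d))"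
    proof -
      have fj: "f j (a + Suc d) = f j (a+d) + nflag N E (a+d) j" by (simp add: f_Suc)
      have IHd: "b N E (a+d) j = b N E a j + g * ((\<Sum>i\<in>in_nbrs N E j. f i (a+d)) - real (out_deg N E j) * f j (a+d))"
        using Suc by simp
      show ?thesis unfolding fs fj IHd by (simp add: algebra_simps)
    qed
    finally show ?case .
  qed
  have pos_a: "b N E a j \<ge> 0" if "j \<in> nodes N" "\<not> b N E k j < 0" for j
    using inv'[of a j] a that by auto
  have pair: "f i (a+d) \<le> real N * (f j (a+d) + 1)"
    if e: "(i,j) \<in> E" and ij: "i \<in> nodes N" "j \<in> nodes N" and jp: "\<not> b N E k j < 0" and "d \<le> M" for i j d
    using that(5)
  proof (induction d)
    case 0 then show ?case by (simp add: f_a)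
  next
    case (Suc d)
    have IH: "f i (a+d) \<le> real N * (f j (a+d) + 1)" using Suc by simp
    have fi1: "f i (a + Suc d) \<le> f i (a+d) + 1" using nflag_01[of N E "a+d" i] by (auto simp: f_Suc)
    have x2: "real N \<ge> 2" using N2 by simp
    show ?case
    proof (cases "nflag N E (a+d) j = 1")
      case True
      then have "f j (a + Suc d) = f j (a+d) + 1" by (simp add: f_Suc)
      then show ?thesis using IH fi1 x2 by (simp add: algebra_simps)
    next
      case False
      then have n0: "nflag N E (a+d) j = 0" using nflag_01 by metis
      have gd: "stepsize (a + d) = g" using Suc.prems by (intro gs) auto
      have blt: "b N E (a+d) j < real (out_deg N E j) * g" using n0 gd by (simp add: nflag_eq split: if_splits)
      have br: "b N E (a+d) j = b N E a j + g * ((\<Sum>i\<in>in_nbrs N E j. f i (a+d)) - real (out_deg N E j) * f j (a+d))"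
        using brep[of d j] Suc.prems ij by simp
      have ba: "b N E a j \<ge> 0" using pos_a ij jp by simp
      have "g * ((\<Sum>i\<in>in_nbrs N E j. f i (a+d)) - real (out_deg N E j) * f j (a+d)) < g * real (out_deg N E j)"
        using blt br ba by (simp add: algebra_simps)
      then have lt1: "(\<Sum>i\<in>in_nbrs N E j. f i (a+d)) - real (out_deg N E j) * f j (a+d) < real (out_deg N E j)"
        using g_pos by simp
      have iin: "i \<in> in_nbrs N E j" using e ij by (simp add: in_nbrs_def)
      have fin: "finite (in_nbrs N E j)" by (simp add: in_nbrs_def)
      have "f i (a+d) \<le> (\<Sum>i\<in>in_nbrs N E j. f i (a+d))"
        by (rule member_le_sum[OF iin]) (auto simp: f_nn fin)
      then have "f i (a+d) < real (out_deg N E j) * (1 + f j (a+d))" using lt1 by (simp add: algebra_simps)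
      also have "\<dots> \<le> (real N - 1) * (1 + f j (a+d))"
        using out_deg_le[OF sc N2 ij(2)] N2 f_nn[of j "a+d"] by (intro mult_right_mono) auto
      finally have A: "f i (a + Suc d) < (real N - 1) * (1 + f j (a+d)) + 1" using fi1 by linarith
      have B: "f j (a + Suc d) = f j (a+d)" using n0 by (simp add: f_Suc)
      have C: "(real N - 1) * (1 + f j (a+d)) + 1 \<le> real N * (f j (a+d) + 1)"
        using f_nn[of j "a+d"] by (simp add: algebra_simps)
      show ?thesis unfolding B using A C by linarith
    qed
  qed
  have zero: "f i (a+M) = 0"
    if i: "i \<in> nodes N" and c: "b N E k i < 0 \<or> (\<exists>j\<in>nodes N. (i,j) \<in> E \<and> b N E k j < 0)" for i
    unfolding f_def
  proof (rule sum.neutral, rule ballI)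
    fix s assume s: "s \<in> {a..<a+M}"
    then have sk: "k \<le> s" "s \<le> k + W" using a by auto
    show "nflag N E s i = 0"
    proof (rule ccontr)
      assume "nflag N E s i \<noteq> 0"
      then have pos: "nflag N E s i > 0" using nflag_01[of N E s i] by auto
      show False using c
      proof
        assume "b N E k i < 0"
        then have "b N E s i < 0" using inv'[of s i] sk i by auto
        moreover have "real (out_deg N E i) * stepsize s \<ge> 0" using stepsize_pos[of s] by simp
        ultimately have "nflag N E s i = 0" by (simp add: nflag_eq)
        then show False using pos by simp
      next
        assume "\<exists>j\<in>nodes N. (i,j) \<in> E \<and> b N E k j < 0"
        then obtain j where j: "j \<in> nodes N" "(i,j) \<in> E" "b N E k j < 0" by blast
        then have "b N E s j < 0" using inv'[of s j] sk by auto
        moreover have "j \<in> out_nbrs N E i" using j by (simp add: out_nbrs_def)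
        ultimately have "decreasing_event N E s" using pos i unfolding decreasing_event_def by blast
        then show False using noD sk W_def by simp
      qed
    qed
  qed
  define B where "B m = (if m = 0 then 0 else 2 * real N ^ (m - 1) - 2)" for m
  have B_nn: "B m \<ge> 0" for m
  proof -
    have "real N ^ (m - 1) \<ge> 1" using N2 by (intro one_le_power) simp
    then show ?thesis unfolding B_def by simp
  qed
  have B_mono: "B m \<le> B (Suc m)" for m
  proof (cases m)
    case 0 then show ?thesis by (simp add: B_def)
  next
    case (Suc m')
    have "real N ^ m' \<le> real N ^ Suc m'" using N2 by (intro power_increasing) auto
    then show ?thesis unfolding B_def Suc by simp
  qed
  have levb: "\<forall>i\<in>lev N E Neg m. f i (a+M) \<le> B m" for m
  proof (induction m)
    case 0
    show ?case unfolding Neg_def using zero by (auto simp: B_def)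
  next
    case (Suc m)
    show ?case
    proof
      fix i assume iS: "i \<in> lev N E Neg (Suc m)"
      show "f i (a+M) \<le> B (Suc m)"
      proof (cases "i \<in> lev N E Neg m")
        case True
        then show ?thesis using Suc B_mono[of m] by force
      next
        case False
        then obtain j where i: "i \<in> nodes N" and j: "j \<in> lev N E Neg m" "(i,j) \<in> E" using iS by auto
        have jV: "j \<in> nodes N" using j(2) E_sub[OF sc N2] by auto
        show ?thesis
        proof (cases "b N E k i < 0 \<or> b N E k j < 0")
          case True
          then have "f i (a+M) = 0" using zero[of i] i jV j by blast
          then show ?thesis using B_nn by simp
        next
          case False
          then have jn: "j \<notin> Neg" by (simp add: Neg_def)
          then have m0: "m \<noteq> 0" using j(1) by (cases m) auto
          have fj: "f j (a+M) \<le> B m" using Suc j(1) by blast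
          have "f i (a+M) \<le> real N * (f j (a+M) + 1)" using pair[OF j(2) i jV _ order_refl] False by simp
          also have "\<dots> \<le> real N * (B m + 1)" using fj by (intro mult_left_mono) auto
          also have "\<dots> = 2 * real N ^ m - real N"
          proof -
            have "real N * real N ^ (m - 1) = real N ^ m" using m0 by (cases m) auto
            then show ?thesis unfolding B_def using m0 by (simp add: algebra_simps)
          qed
          also have "\<dots> \<le> B (Suc m)" unfolding B_def using N2 by simp
          finally show ?thesis .
        qed
      qed
    qed
  qed
  have Neg_ne: "Neg \<noteq> {}"
  proof
    assume "Neg = {}"
    then have nn: "\<forall>i\<in>nodes N. b N E k i \<ge> 0" unfolding Neg_def by force
    have "eps_norm1 N E k = (\<Sum>i\<in>nodes N. b N E k i)"
      unfolding eps_norm1_def using nn by (intro sum.cong) auto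
    then have "eps_norm1 N E k = 0" by (simp add: sum_b_zero)
    moreover have "2 * real N * (real N - 1) * stepsize k > 0" using N2 gk by simp
    ultimately show False using hyp by linarith
  qed
  have full: "lev N E Neg (N - 1) = nodes N"
    by (rule lev_full[OF sc N2 Neg_ne]) (auto simp: Neg_def)
  have upper: "(\<Sum>i\<in>nodes N. f i (a+M)) \<le> real N * B (N - 1)"
  proof -
    have "(\<Sum>i\<in>nodes N. f i (a+M)) \<le> (\<Sum>i\<in>nodes N. B (N - 1))"
      using levb[of "N-1"] full by (intro sum_mono) auto
    then show ?thesis by simp
  qed
  have lower: "(\<Sum>i\<in>nodes N. f i (a+M)) \<ge> real M"
  proof -
    have "(\<Sum>i\<in>nodes N. f i (a+M)) = (\<Sum>s\<in>{a..<a+M}. \<Sum>i\<in>nodes N. nflag N E s i)"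
      unfolding f_def by (rule sum.swap)
    also have "\<dots> \<ge> (\<Sum>s\<in>{a..<a+M}. 1)"
    proof (rule sum_mono)
      fix s assume s: "s \<in> {a..<a+M}"
      then obtain i where i: "i \<in> nodes N" "nflag N E s i = 1" using fire[of s] a by auto
      have "nflag N E s i \<le> (\<Sum>i\<in>nodes N. nflag N E s i)"
        by (rule member_le_sum[OF i(1)]) (auto simp: nflag_nonneg)
      then show "1 \<le> (\<Sum>i\<in>nodes N. nflag N E s i)" using i by simp
    qed
    finally show ?thesis by simp
  qed
  have "real N * B (N - 1) < real M"
  proof -
    have n1: "N - 1 \<noteq> 0" using N2 by simp
    have e: "real N * real N ^ (N - 1 - 1) = real N ^ (N - 1)"
      using n1 by (cases "N - 1") auto
    have "real N * B (N - 1) = 2 * real N ^ (N - 1) - 2 * real N"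
      unfolding B_def using n1 e by (simp add: algebra_simps)
    moreover have "real M = 2 * real N ^ (N - 1)" by (simp add: M_def)
    ultimately show ?thesis using N2 by simp
  qed
  then show False using upper lower by linarith
qed

end

theorem proposition1:
  fixes N :: nat and E :: "(nat \<times> nat) set" and k :: nat
  assumes "N \<ge> 2"
    and "strongly_connected N E"
    and "eps_norm1 N E k \<ge> 2 * real N * (real N - 1) * stepsize k"
  shows "\<exists>t::nat. k \<le> t \<and> t \<le> k + N ^ (2 * N) \<and> decreasing_event N E t"
proof (rule ccontr)
  assume "\<not> ?thesis"
  then have "\<And>t. k \<le> t \<Longrightarrow> t \<le> k + N ^ (2 * N) \<Longrightarrow> \<not> decreasing_event N E t" by blast
  then show False using main_contra[OF assms(2) assms(1) assms(3)] by blast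
qed

end
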